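(* Let $A$ and $B$ be rings, $f: A\to B$ an injective ring homomorphism and $J$ a proper ideal of $B$. Suppose that either (i) $f(A)\cap J=\{0\}$, or (ii) $J\subseteq\mathrm{nil}(B)$. Then $A\bowtie^{f}J$ is a nil-Armendariz ring if and only if $f(A)+J$ is a nil-Armendariz ring.
   Context: All rings are associative with identity (not necessarily commutative), ring homomorphisms are unital, and ideals are two-sided. $\mathrm{nil}(R)$ denotes the set of nilpotent elements of a ring $R$, and $\mathrm{nil}(R)[x]$ the set of polynomials all of whose coefficients lie in $\mathrm{nil}(R)$. For a ring homomorphism $f:A\to B$ and an ideal $J$ of $B$, the amalgamation is the subring $A\bowtie^{f}J=\{(a,f(a)+j)\mid a\in A,\ j\in J\}$ of $A\times B$; $f(A)+J=\{f(a)+j: a\in A, j\in J\}$ is a subring of $B$. A ring $R$ is nil-Armendariz if whenever $p(x)=\sum_{i=0}^n a_ix^i$ and $q(x)=\sum_{j=0}^m b_jx^j$ in $R[x]$ satisfy $p(x)q(x)\in\mathrm{nil}(R)[x]$, then $a_ib_j\in\mathrm{nil}(R)$ for all $i,j$. *)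

theory Defs
  imports "HOL-Algebra.Algebra"
begin

definition nilr :: "('a, 'm) ring_scheme \<Rightarrow> 'a set" where
  "nilr R = {x \<in> carrier R. \<exists>n::nat. x [^]\<^bsub>R\<^esub> n = \<zero>\<^bsub>R\<^esub>}"

text \<open>Nil-Armendariz rings, via the univariate polynomial ring UP R
  (coefficients of the product p q are sums of p i times q (k - i), in this order).\<close>
definition nil_armendariz :: "('a, 'm) ring_scheme \<Rightarrow> bool" where
  "nil_armendariz R \<longleftrightarrow>
     (\<forall>p \<in> carrier (UP R). \<forall>q \<in> carrier (UP R).
        (\<forall>k. coeff (UP R) (p \<otimes>\<^bsub>UP R\<^esub> q) k \<in> nilr R) \<longrightarrow>
        (\<forall>i j. coeff (UP R) p i \<otimes>\<^bsub>R\<^esub> coeff (UP R) q j \<in> nilr R))"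

definition amalg :: "('a, 'm) ring_scheme \<Rightarrow> ('b, 'n) ring_scheme \<Rightarrow> ('a \<Rightarrow> 'b) \<Rightarrow> 'b set
                      \<Rightarrow> ('a \<times> 'b) ring" where
  "amalg A B f J = (RDirProd A B)\<lparr> carrier :=
      {(a, f a \<oplus>\<^bsub>B\<^esub> j) | a j. a \<in> carrier A \<and> j \<in> J} \<rparr>"

definition fA_plus_J :: "('a, 'm) ring_scheme \<Rightarrow> ('b, 'n) ring_scheme \<Rightarrow> ('a \<Rightarrow> 'b) \<Rightarrow> 'b set
                      \<Rightarrow> ('b, 'n) ring_scheme" where
  "fA_plus_J A B f J = B\<lparr> carrier := {f a \<oplus>\<^bsub>B\<^esub> j | a j. a \<in> carrier A \<and> j \<in> J} \<rparr>"

end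

theory Submission imports Defs begin

lemma UP_coeff_eq: "p \<in> carrier (UP R) \<Longrightarrow> coeff (UP R) p n = p n"
  by (simp add: UP_def)

lemma UP_coeff_mult:
  assumes "ring R" "p \<in> carrier (UP R)" "q \<in> carrier (UP R)"
  shows "coeff (UP R) (p \<otimes>\<^bsub>UP R\<^esub> q) k = (\<Oplus>\<^bsub>R\<^esub> i \<in> {..k}. p i \<otimes>\<^bsub>R\<^esub> q (k - i))"
proof -
  have U: "UP_ring R" using assms(1) by (simp add: UP_ring_def)
  have "up_ring.coeff (UP R) (p \<otimes>\<^bsub>UP R\<^esub> q) k = (\<Oplus>\<^bsub>R\<^esub> i \<in> {..k}. up_ring.coeff (UP R) p i \<otimes>\<^bsub>R\<^esub> up_ring.coeff (UP R) q (k - i))"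
    using UP_ring.coeff_mult[OF U] assms by simp
  then show ?thesis using assms by (simp add: UP_coeff_eq)
qed

lemma UP_mult_in:
  assumes "ring R" "p \<in> carrier (UP R)" "q \<in> carrier (UP R)"
  shows "p \<otimes>\<^bsub>UP R\<^esub> q \<in> carrier (UP R)"
proof -
  have U: "UP_ring R" using assms(1) by (simp add: UP_ring_def)
  show ?thesis using UP_ring.UP_mult_closed[OF U] assms by simp
qed

lemma UP_carrier_iff: "p \<in> carrier (UP R) \<longleftrightarrow> (\<forall>n. p n \<in> carrier R) \<and> (\<exists>n. \<forall>m>n. p m = \<zero>\<^bsub>R\<^esub>)"
  by (auto simp add: UP_def up_def bound_def)


lemma map_poly_in:
  assumes "ring R" "ring S" "h \<in> ring_hom R S" "p \<in> carrier (UP R)"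
  shows "(\<lambda>n. h (p n)) \<in> carrier (UP S)"
proof -
  interpret H: ring_hom_ring R S h using assms by (simp add: ring_hom_ring_def ring_hom_ring_axioms_def)
  show ?thesis using assms(4) unfolding UP_carrier_iff by (metis H.hom_closed H.hom_zero)
qed

lemma map_poly_mult:
  assumes "ring R" "ring S" "h \<in> ring_hom R S" "p \<in> carrier (UP R)" "q \<in> carrier (UP R)"
  shows "h (coeff (UP R) (p \<otimes>\<^bsub>UP R\<^esub> q) k) =
     coeff (UP S) ((\<lambda>n. h (p n)) \<otimes>\<^bsub>UP S\<^esub> (\<lambda>n. h (q n))) k"
proof -
  interpret H: ring_hom_ring R S h using assms by (simp add: ring_hom_ring_def ring_hom_ring_axioms_def)
  have pc: "\<And>n. p n \<in> carrier R" "\<And>n. q n \<in> carrier R" using assms(4,5) unfolding UP_carrier_iff by auto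
  show ?thesis
    using assms pc
    by (simp add: UP_coeff_mult map_poly_in Pi_def o_def)
qed

lemma lift_poly:
  assumes "ring R" "ring S" "h \<in> ring_hom R S" "h ` carrier R = carrier S" "P \<in> carrier (UP S)"
  obtains p where "p \<in> carrier (UP R)" "(\<lambda>n. h (p n)) = P"
proof -
  interpret H: ring_hom_ring R S h using assms by (simp add: ring_hom_ring_def ring_hom_ring_axioms_def)
  define p where "p n = (if P n = \<zero>\<^bsub>S\<^esub> then \<zero>\<^bsub>R\<^esub> else (SOME x. x \<in> carrier R \<and> h x = P n))" for n
  have Pc: "\<And>n. P n \<in> carrier S" and b: "\<exists>n. \<forall>m>n. P m = \<zero>\<^bsub>S\<^esub>" using assms(5) unfolding UP_carrier_iff by auto
  have ex: "\<And>n. \<exists>x. x \<in> carrier R \<and> h x = P n" using Pc assms(4) by (metis imageE)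
  have "\<And>n. p n \<in> carrier R \<and> h (p n) = P n"
  proof -
    fix n show "p n \<in> carrier R \<and> h (p n) = P n"
      using someI_ex[OF ex[of n]] by (auto simp: p_def)
  qed
  moreover have "p \<in> carrier (UP R)" unfolding UP_carrier_iff using calculation b p_def by auto
  ultimately show ?thesis using that by auto
qed

lemma transfer_na:
  assumes R: "ring R" and S: "ring S" and h: "h \<in> ring_hom R S" and surj: "h ` carrier R = carrier S"
   and nil: "\<And>x. x \<in> carrier R \<Longrightarrow> x \<in> nilr R \<longleftrightarrow> h x \<in> nilr S"
  shows "nil_armendariz R \<longleftrightarrow> nil_armendariz S"
proof
  interpret H: ring_hom_ring R S h using R S h by (simp add: ring_hom_ring_def ring_hom_ring_axioms_def)
  assume NR: "nil_armendariz R"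
  show "nil_armendariz S" unfolding nil_armendariz_def
  proof (intro ballI impI allI)
    fix P Q i j assume P: "P \<in> carrier (UP S)" and Q: "Q \<in> carrier (UP S)"
      and PQ: "\<forall>k. coeff (UP S) (P \<otimes>\<^bsub>UP S\<^esub> Q) k \<in> nilr S"
    obtain p where p: "p \<in> carrier (UP R)" "(\<lambda>n. h (p n)) = P" using lift_poly[OF R S h surj P] by blast
    obtain q where q: "q \<in> carrier (UP R)" "(\<lambda>n. h (q n)) = Q" using lift_poly[OF R S h surj Q] by blast
    have pc: "\<And>n. p n \<in> carrier R" "\<And>n. q n \<in> carrier R" using p q unfolding UP_carrier_iff by auto
    have "\<forall>k. coeff (UP R) (p \<otimes>\<^bsub>UP R\<^esub> q) k \<in> nilr R"
    proof
      fix k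
      have c: "coeff (UP R) (p \<otimes>\<^bsub>UP R\<^esub> q) k \<in> carrier R"
        using UP_mult_in[OF R p(1) q(1)] UP_coeff_eq[OF UP_mult_in[OF R p(1) q(1)]] unfolding UP_carrier_iff by simp
      have "h (coeff (UP R) (p \<otimes>\<^bsub>UP R\<^esub> q) k) \<in> nilr S"
        using map_poly_mult[OF R S h p(1) q(1), of k] p(2) q(2) PQ by simp
      then show "coeff (UP R) (p \<otimes>\<^bsub>UP R\<^esub> q) k \<in> nilr R" using nil c by blast
    qed
    then have "p i \<otimes>\<^bsub>R\<^esub> q j \<in> nilr R" using NR p(1) q(1) unfolding nil_armendariz_def
      by (auto simp: UP_coeff_eq)
    then have "h (p i \<otimes>\<^bsub>R\<^esub> q j) \<in> nilr S" using nil pc by blast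
    then have "h (p i) \<otimes>\<^bsub>S\<^esub> h (q j) \<in> nilr S" using pc by simp
    then show "coeff (UP S) P i \<otimes>\<^bsub>S\<^esub> coeff (UP S) Q j \<in> nilr S"
      using P Q p(2) q(2) by (auto simp: UP_coeff_eq)
  qed
next
  interpret H: ring_hom_ring R S h using R S h by (simp add: ring_hom_ring_def ring_hom_ring_axioms_def)
  assume NS: "nil_armendariz S"
  show "nil_armendariz R" unfolding nil_armendariz_def
  proof (intro ballI impI allI)
    fix p q i j assume p: "p \<in> carrier (UP R)" and q: "q \<in> carrier (UP R)"
      and pq: "\<forall>k. coeff (UP R) (p \<otimes>\<^bsub>UP R\<^esub> q) k \<in> nilr R"
    have pc: "\<And>n. p n \<in> carrier R" "\<And>n. q n \<in> carrier R" using p q unfolding UP_carrier_iff by auto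
    have hp: "(\<lambda>n. h (p n)) \<in> carrier (UP S)" "(\<lambda>n. h (q n)) \<in> carrier (UP S)"
      using map_poly_in[OF R S h] p q by auto
    have "\<forall>k. coeff (UP S) ((\<lambda>n. h (p n)) \<otimes>\<^bsub>UP S\<^esub> (\<lambda>n. h (q n))) k \<in> nilr S"
    proof
      fix k
      have c: "coeff (UP R) (p \<otimes>\<^bsub>UP R\<^esub> q) k \<in> carrier R"
        using UP_mult_in[OF R p q] UP_coeff_eq[OF UP_mult_in[OF R p q]] unfolding UP_carrier_iff by simp
      show "coeff (UP S) ((\<lambda>n. h (p n)) \<otimes>\<^bsub>UP S\<^esub> (\<lambda>n. h (q n))) k \<in> nilr S"
        using map_poly_mult[OF R S h p q, of k, symmetric] nil[OF c] pq by simp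
    qed
    then have "coeff (UP S) (\<lambda>n. h (p n)) i \<otimes>\<^bsub>S\<^esub> coeff (UP S) (\<lambda>n. h (q n)) j \<in> nilr S"
      using NS hp unfolding nil_armendariz_def by blast
    then have "h (p i) \<otimes>\<^bsub>S\<^esub> h (q j) \<in> nilr S" using hp by (simp add: UP_coeff_eq)
    then have "h (p i \<otimes>\<^bsub>R\<^esub> q j) \<in> nilr S" using pc by simp
    then show "coeff (UP R) p i \<otimes>\<^bsub>R\<^esub> coeff (UP R) q j \<in> nilr R"
      using nil pc p q by (auto simp: UP_coeff_eq)
  qed
qed


lemma RD_mult: "x \<otimes>\<^bsub>RDirProd A B\<^esub> y = (fst x \<otimes>\<^bsub>A\<^esub> fst y, snd x \<otimes>\<^bsub>B\<^esub> snd y)"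
  by (cases x; cases y) (simp add: RDirProd_def DirProd_def monoid.defs)
lemma RD_add: "x \<oplus>\<^bsub>RDirProd A B\<^esub> y = (fst x \<oplus>\<^bsub>A\<^esub> fst y, snd x \<oplus>\<^bsub>B\<^esub> snd y)"
  by (cases x; cases y) (simp add: RDirProd_def DirProd_def monoid.defs)
lemma RD_one: "\<one>\<^bsub>RDirProd A B\<^esub> = (\<one>\<^bsub>A\<^esub>, \<one>\<^bsub>B\<^esub>)"
  by (simp add: RDirProd_def DirProd_def monoid.defs)
lemma RD_zero: "\<zero>\<^bsub>RDirProd A B\<^esub> = (\<zero>\<^bsub>A\<^esub>, \<zero>\<^bsub>B\<^esub>)"
  by (simp add: RDirProd_def DirProd_def monoid.defs)

lemma amalg_pow: "x [^]\<^bsub>amalg A B f J\<^esub> (n::nat) = (fst x [^]\<^bsub>A\<^esub> n, snd x [^]\<^bsub>B\<^esub> n)"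
  by (induct n) (simp_all add: amalg_def RD_mult RD_one)

lemma fA_pow: "x [^]\<^bsub>fA_plus_J A B f J\<^esub> (n::nat) = x [^]\<^bsub>B\<^esub> n"
  by (induct n) (simp_all add: fA_plus_J_def)

lemma amalg_subring:
  assumes "ring A" and "ring B" and "f \<in> ring_hom A B" and "ideal J B"
  shows "subring {(a, f a \<oplus>\<^bsub>B\<^esub> j) | a j. a \<in> carrier A \<and> j \<in> J} (RDirProd A B)"
    (is "subring ?H _")
proof -
  interpret A: ring A by fact
  interpret B: ring B by fact
  interpret fh: ring_hom_ring A B f using assms by (simp add: ring_hom_ring_def ring_hom_ring_axioms_def)
  interpret J: ideal J B by fact
  have RD: "ring (RDirProd A B)" using RDirProd_ring assms by blast
  have Jc: "\<And>j. j \<in> J \<Longrightarrow> j \<in> carrier B" using J.a_subset by blast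
  show ?thesis
  proof (rule ring.subringI[OF RD])
    show "?H \<subseteq> carrier (RDirProd A B)" using Jc by (auto simp: RDirProd_carrier)
  next
    show "\<one>\<^bsub>RDirProd A B\<^esub> \<in> ?H"
      by (auto simp: RD_one intro!: exI[of _ "\<one>\<^bsub>A\<^esub>"] exI[of _ "\<zero>\<^bsub>B\<^esub>"])
  next
    fix h assume "h \<in> ?H"
    then obtain a j where h: "h = (a, f a \<oplus>\<^bsub>B\<^esub> j)" "a \<in> carrier A" "j \<in> J" by blast
    have hc: "h \<in> carrier (RDirProd A B)" using h Jc by (auto simp: RDirProd_carrier)
    have yc: "(\<ominus>\<^bsub>A\<^esub> a, \<ominus>\<^bsub>B\<^esub> (f a \<oplus>\<^bsub>B\<^esub> j)) \<in> carrier (RDirProd A B)"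
      using h Jc by (auto simp: RDirProd_carrier)
    have "(\<ominus>\<^bsub>A\<^esub> a, \<ominus>\<^bsub>B\<^esub> (f a \<oplus>\<^bsub>B\<^esub> j)) \<oplus>\<^bsub>RDirProd A B\<^esub> h = \<zero>\<^bsub>RDirProd A B\<^esub>"
      using h Jc by (simp add: RD_add RD_zero A.l_neg B.l_neg)
    then have "\<ominus>\<^bsub>RDirProd A B\<^esub> h = (\<ominus>\<^bsub>A\<^esub> a, \<ominus>\<^bsub>B\<^esub> (f a \<oplus>\<^bsub>B\<^esub> j))"
      using abelian_group.minus_equality[OF ring.is_abelian_group[OF RD]] hc yc by blast
    also have "\<dots> = (\<ominus>\<^bsub>A\<^esub> a, f (\<ominus>\<^bsub>A\<^esub> a) \<oplus>\<^bsub>B\<^esub> \<ominus>\<^bsub>B\<^esub> j)"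
      using h Jc by (simp add: B.minus_add)
    finally show "\<ominus>\<^bsub>RDirProd A B\<^esub> h \<in> ?H" using h J.a_inv_closed by blast
  next
    fix h1 h2 assume "h1 \<in> ?H" "h2 \<in> ?H"
    then obtain a j c k where h: "h1 = (a, f a \<oplus>\<^bsub>B\<^esub> j)" "a \<in> carrier A" "j \<in> J"
       "h2 = (c, f c \<oplus>\<^bsub>B\<^esub> k)" "c \<in> carrier A" "k \<in> J" by blast
    have jc: "j \<in> carrier B" "k \<in> carrier B" using h Jc by auto
    have "(f a \<oplus>\<^bsub>B\<^esub> j) \<otimes>\<^bsub>B\<^esub> (f c \<oplus>\<^bsub>B\<^esub> k)
        = f (a \<otimes>\<^bsub>A\<^esub> c) \<oplus>\<^bsub>B\<^esub> ((f a \<otimes>\<^bsub>B\<^esub> k \<oplus>\<^bsub>B\<^esub> j \<otimes>\<^bsub>B\<^esub> f c) \<oplus>\<^bsub>B\<^esub> j \<otimes>\<^bsub>B\<^esub> k)"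
      using h jc by (simp add: B.l_distr B.r_distr B.a_ac)
    moreover have "(f a \<otimes>\<^bsub>B\<^esub> k \<oplus>\<^bsub>B\<^esub> j \<otimes>\<^bsub>B\<^esub> f c) \<oplus>\<^bsub>B\<^esub> j \<otimes>\<^bsub>B\<^esub> k \<in> J"
      using h jc by (intro J.a_closed J.I_l_closed J.I_r_closed) auto
    ultimately show "h1 \<otimes>\<^bsub>RDirProd A B\<^esub> h2 \<in> ?H" using h
      by (auto simp: RD_mult intro!: exI[of _ "a \<otimes>\<^bsub>A\<^esub> c"])
  next
    fix h1 h2 assume "h1 \<in> ?H" "h2 \<in> ?H"
    then obtain a j c k where h: "h1 = (a, f a \<oplus>\<^bsub>B\<^esub> j)" "a \<in> carrier A" "j \<in> J"
       "h2 = (c, f c \<oplus>\<^bsub>B\<^esub> k)" "c \<in> carrier A" "k \<in> J" by blast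
    have jc: "j \<in> carrier B" "k \<in> carrier B" using h Jc by auto
    have "(f a \<oplus>\<^bsub>B\<^esub> j) \<oplus>\<^bsub>B\<^esub> (f c \<oplus>\<^bsub>B\<^esub> k) = f (a \<oplus>\<^bsub>A\<^esub> c) \<oplus>\<^bsub>B\<^esub> (j \<oplus>\<^bsub>B\<^esub> k)"
      using h jc by (simp add: B.a_ac)
    moreover have "j \<oplus>\<^bsub>B\<^esub> k \<in> J" using h by (intro J.a_closed) auto
    ultimately show "h1 \<oplus>\<^bsub>RDirProd A B\<^esub> h2 \<in> ?H" using h
      by (auto simp: RD_add intro!: exI[of _ "a \<oplus>\<^bsub>A\<^esub> c"])
  qed
qed


lemma snd_hom: "ring A \<Longrightarrow> ring B \<Longrightarrow> snd \<in> ring_hom (RDirProd A B) B"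
  by (auto simp: ring_hom_def RD_mult RD_add RD_one RDirProd_carrier)

theorem theorem3p1:
  fixes A :: "('a, 'm) ring_scheme" and B :: "('b, 'n) ring_scheme"
    and f :: "'a \<Rightarrow> 'b" and J :: "'b set"
  assumes "ring A" and "ring B"
    and "f \<in> ring_hom A B" and "inj_on f (carrier A)"
    and "ideal J B" and "J \<noteq> carrier B"
    and "f ` carrier A \<inter> J = {\<zero>\<^bsub>B\<^esub>} \<or> J \<subseteq> nilr B"
  shows "nil_armendariz (amalg A B f J) \<longleftrightarrow> nil_armendariz (fA_plus_J A B f J)"
proof -
  interpret A: ring A by fact
  interpret B: ring B by fact
  interpret fh: ring_hom_ring A B f using assms by (simp add: ring_hom_ring_def ring_hom_ring_axioms_def)
  interpret J: ideal J B by fact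
  define H where "H = {(a, f a \<oplus>\<^bsub>B\<^esub> j) | a j. a \<in> carrier A \<and> j \<in> J}"
  have RD: "ring (RDirProd A B)" using RDirProd_ring assms by blast
  have subH: "subring H (RDirProd A B)" unfolding H_def using amalg_subring assms by blast
  have am: "amalg A B f J = (RDirProd A B)\<lparr>carrier := H\<rparr>" unfolding amalg_def H_def by simp
  have ringAm: "ring (amalg A B f J)" unfolding am using ring.subring_is_ring[OF RD subH] .
  have carAm: "carrier (amalg A B f J) = H" unfolding am by simp
  have hh: "ring_hom_ring (RDirProd A B) B snd" using RD assms snd_hom
    by (simp add: ring_hom_ring_def ring_hom_ring_axioms_def)
  have sH: "snd ` H = {f a \<oplus>\<^bsub>B\<^esub> j | a j. a \<in> carrier A \<and> j \<in> J}" unfolding H_def by force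
  have fA: "fA_plus_J A B f J = B\<lparr>carrier := snd ` H\<rparr>" unfolding fA_plus_J_def sH by simp
  have ringFA: "ring (fA_plus_J A B f J)" unfolding fA
    using ring.subring_is_ring[OF assms(2) ring_hom_ring.img_is_subring[OF hh subH]] .
  have carFA: "carrier (fA_plus_J A B f J) = snd ` H" unfolding fA by simp
  have Jc: "\<And>j. j \<in> J \<Longrightarrow> j \<in> carrier B" using J.a_subset by blast
  have hom: "snd \<in> ring_hom (amalg A B f J) (fA_plus_J A B f J)"
    using subH unfolding ring_hom_def carAm carFA
    by (auto simp: amalg_def fA_plus_J_def RD_mult RD_add RD_one)
  show ?thesis
  proof (rule transfer_na[OF ringAm ringFA hom])
    show "snd ` carrier (amalg A B f J) = carrier (fA_plus_J A B f J)" using carAm carFA by simp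
  next
    fix x assume xc: "x \<in> carrier (amalg A B f J)"
    then obtain a j where x: "x = (a, f a \<oplus>\<^bsub>B\<^esub> j)" "a \<in> carrier A" "j \<in> J"
      unfolding carAm H_def by blast
    have sc: "snd x \<in> carrier (fA_plus_J A B f J)" using xc carAm carFA by auto
    have z: "\<zero>\<^bsub>amalg A B f J\<^esub> = (\<zero>\<^bsub>A\<^esub>, \<zero>\<^bsub>B\<^esub>)" by (simp add: amalg_def RD_zero)
    have zf: "\<zero>\<^bsub>fA_plus_J A B f J\<^esub> = \<zero>\<^bsub>B\<^esub>" by (simp add: fA_plus_J_def)
    show "x \<in> nilr (amalg A B f J) \<longleftrightarrow> snd x \<in> nilr (fA_plus_J A B f J)"
    proof
      assume "x \<in> nilr (amalg A B f J)"
      then obtain n where "x [^]\<^bsub>amalg A B f J\<^esub> (n::nat) = \<zero>\<^bsub>amalg A B f J\<^esub>"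
        unfolding nilr_def by blast
      then have "snd x [^]\<^bsub>B\<^esub> n = \<zero>\<^bsub>B\<^esub>" unfolding amalg_pow z by simp
      then show "snd x \<in> nilr (fA_plus_J A B f J)" using sc unfolding nilr_def fA_pow zf by blast
    next
      assume "snd x \<in> nilr (fA_plus_J A B f J)"
      then obtain n where bn: "snd x [^]\<^bsub>B\<^esub> (n::nat) = \<zero>\<^bsub>B\<^esub>"
        unfolding nilr_def fA_pow zf by blast
      have "x [^]\<^bsub>amalg A B f J\<^esub> n \<in> H" using monoid.nat_pow_closed[OF ring.is_monoid[OF ringAm] xc] carAm by simp
      then obtain a' j' where aj: "(a [^]\<^bsub>A\<^esub> n, snd x [^]\<^bsub>B\<^esub> n) = (a', f a' \<oplus>\<^bsub>B\<^esub> j')"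
        "a' \<in> carrier A" "j' \<in> J"
        unfolding amalg_pow H_def using x by auto
      have an: "a [^]\<^bsub>A\<^esub> n \<in> carrier A" using x by simp
      have e: "f (a [^]\<^bsub>A\<^esub> n) \<oplus>\<^bsub>B\<^esub> j' = \<zero>\<^bsub>B\<^esub>" using aj bn by simp
      have "\<ominus>\<^bsub>B\<^esub> j' = f (a [^]\<^bsub>A\<^esub> n)"
        using B.minus_equality[OF e] Jc aj(3) an by simp
      then have fJ: "f (a [^]\<^bsub>A\<^esub> n) \<in> J" using J.a_inv_closed aj(3) by metis
      obtain m where m: "f (a [^]\<^bsub>A\<^esub> n) [^]\<^bsub>B\<^esub> (m::nat) = \<zero>\<^bsub>B\<^esub>"
      proof (cases "f ` carrier A \<inter> J = {\<zero>\<^bsub>B\<^esub>}")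
        case True
        then have "f (a [^]\<^bsub>A\<^esub> n) = \<zero>\<^bsub>B\<^esub>" using fJ an by blast
        then show ?thesis using that[of 1] by simp
      next
        case False
        then have "J \<subseteq> nilr B" using assms(7) by blast
        then show ?thesis using that fJ unfolding nilr_def by blast
      qed
      have "f ((a [^]\<^bsub>A\<^esub> n) [^]\<^bsub>A\<^esub> Suc m) = \<zero>\<^bsub>B\<^esub>"
        using m an by (simp add: fh.hom_nat_pow)
      then have "(a [^]\<^bsub>A\<^esub> n) [^]\<^bsub>A\<^esub> Suc m = \<zero>\<^bsub>A\<^esub>"
        using assms(4) an by (metis A.nat_pow_closed A.zero_closed fh.hom_zero inj_onD)
      then have a0: "a [^]\<^bsub>A\<^esub> (n * Suc m) = \<zero>\<^bsub>A\<^esub>" using x(2) by (metis A.nat_pow_pow)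
      have sx: "snd x \<in> carrier B" using sc carFA sH Jc by auto
      have "snd x [^]\<^bsub>B\<^esub> (n * Suc m) = \<zero>\<^bsub>B\<^esub>"
      proof -
        have "snd x [^]\<^bsub>B\<^esub> (n * Suc m) = (snd x [^]\<^bsub>B\<^esub> n) [^]\<^bsub>B\<^esub> Suc m"
          using sx by (metis B.nat_pow_pow)
        then show ?thesis using bn B.nat_pow_zero[of "Suc m"] by simp
      qed
      then have "x [^]\<^bsub>amalg A B f J\<^esub> (n * Suc m) = \<zero>\<^bsub>amalg A B f J\<^esub>"
        unfolding amalg_pow z using a0 x by simp
      then show "x \<in> nilr (amalg A B f J)" using xc unfolding nilr_def by blast
    qed
  qed
qed

end
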